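(* Let $r\ge 2$. Then $\mathscr{Z}^{\rm TAR}(K_{1,r})\cong K_{1,r}\,\square\,K_2$. Furthermore, $\overline{\operatorname{Z}}(K_{1,r})=\operatorname{Z}(K_{1,r})=r-1$ and $z_0(K_{1,r})=\underline{z_0}(K_{1,r})=r$.
   Context: Zero forcing on a graph $G$: starting with a set $S$ of blue vertices (others white), a blue vertex $v$ may change a white vertex $w$ to blue if $w$ is the only white neighbor of $v$. $S$ is a zero forcing set if repeated application colors all of $V(G)$ blue. $\operatorname{Z}(G)$ is the minimum size of a zero forcing set, $\overline{\operatorname{Z}}(G)$ the maximum size of a minimal (under inclusion) zero forcing set. $\mathscr{Z}^{\rm TAR}(G)$ has vertices the zero forcing sets of $G$, two adjacent iff their symmetric difference has size 1; $\mathscr{Z}^{\rm TAR}_k(G)$ is its subgraph induced by zero forcing sets of size at most $k$. $\underline{z_0}(G)$ is the least $k$ with $\mathscr{Z}^{\rm TAR}_k(G)$ connected; $z_0(G)$ is the least $k$ such that $\mathscr{Z}^{\rm TAR}_i(G)$ is connected for every $i=k,\dots,|V(G)|$. $K_{1,r}$ is the star with $r$ leaves; $\square$ denotes the Cartesian product of graphs. *)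

theory Defs
  imports Main
begin

text \<open>A (finite simple) graph is given by a vertex set and a symmetric irreflexive
adjacency relation.\<close>
type_synonym 'a graph = "'a set \<times> ('a \<Rightarrow> 'a \<Rightarrow> bool)"

definition verts :: "'a graph \<Rightarrow> 'a set" where "verts G = fst G"
definition adj :: "'a graph \<Rightarrow> 'a \<Rightarrow> 'a \<Rightarrow> bool" where "adj G = snd G"

text \<open>Final set of blue vertices: least set containing S and closed under the
colour change rule (a blue vertex v all of whose neighbours except w are blue
forces w).\<close>
inductive_set zf_closure :: "'a graph \<Rightarrow> 'a set \<Rightarrow> 'a set" for G S where
  base: "x \<in> S \<Longrightarrow> x \<in> zf_closure G S"
| force: "v \<in> zf_closure G S \<Longrightarrow> v \<in> verts G \<Longrightarrow> w \<in> verts G \<Longrightarrow> adj G v w \<Longrightarrow>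
          (\<forall>u\<in>verts G. adj G v u \<and> u \<noteq> w \<longrightarrow> u \<in> zf_closure G S) \<Longrightarrow>
          w \<in> zf_closure G S"

definition is_zfs :: "'a graph \<Rightarrow> 'a set \<Rightarrow> bool" where
  "is_zfs G S \<longleftrightarrow> S \<subseteq> verts G \<and> verts G \<subseteq> zf_closure G S"

definition minimal_zfs :: "'a graph \<Rightarrow> 'a set \<Rightarrow> bool" where
  "minimal_zfs G S \<longleftrightarrow> is_zfs G S \<and> (\<forall>T. T \<subset> S \<longrightarrow> \<not> is_zfs G T)"

definition Z :: "'a graph \<Rightarrow> nat" where
  "Z G = Min {card S | S. is_zfs G S}"

definition Zbar :: "'a graph \<Rightarrow> nat" where
  "Zbar G = Max {card S | S. minimal_zfs G S}"

definition symdiff :: "'a set \<Rightarrow> 'a set \<Rightarrow> 'a set" where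
  "symdiff S T = (S - T) \<union> (T - S)"

definition TAR :: "'a graph \<Rightarrow> 'a set graph" where
  "TAR G = ({S. is_zfs G S}, (\<lambda>S T. card (symdiff S T) = 1))"

definition TAR_k :: "'a graph \<Rightarrow> nat \<Rightarrow> 'a set graph" where
  "TAR_k G k = ({S. is_zfs G S \<and> card S \<le> k}, (\<lambda>S T. card (symdiff S T) = 1))"

text \<open>Connectedness; the null graph is not connected.\<close>
definition connected_graph :: "'a graph \<Rightarrow> bool" where
  "connected_graph G \<longleftrightarrow> verts G \<noteq> {} \<and>
     (\<forall>x\<in>verts G. \<forall>y\<in>verts G.
        (\<lambda>a b. a \<in> verts G \<and> b \<in> verts G \<and> adj G a b)\<^sup>*\<^sup>* x y)"

definition z0_under :: "'a graph \<Rightarrow> nat" where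
  "z0_under G = (LEAST k. connected_graph (TAR_k G k))"

definition z0 :: "'a graph \<Rightarrow> nat" where
  "z0 G = (LEAST k. \<forall>i. k \<le> i \<and> i \<le> card (verts G) \<longrightarrow> connected_graph (TAR_k G i))"

definition graph_iso :: "'a graph \<Rightarrow> 'b graph \<Rightarrow> bool" where
  "graph_iso G H \<longleftrightarrow> (\<exists>f. bij_betw f (verts G) (verts H) \<and>
     (\<forall>x\<in>verts G. \<forall>y\<in>verts G. adj G x y \<longleftrightarrow> adj H (f x) (f y)))"

definition star :: "nat \<Rightarrow> nat graph" where
  "star r = ({0..r}, (\<lambda>x y. (x = 0 \<and> y \<noteq> 0) \<or> (y = 0 \<and> x \<noteq> 0)))"

definition K2 :: "nat graph" where
  "K2 = ({0, 1}, (\<lambda>x y. x \<noteq> y))"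

definition cart_prod :: "'a graph \<Rightarrow> 'b graph \<Rightarrow> ('a \<times> 'b) graph" where
  "cart_prod G H = (verts G \<times> verts H,
     (\<lambda>(a, b) (c, d). (a = c \<and> adj H b d) \<or> (b = d \<and> adj G a c)))"

end

theory Submission imports Defs begin

lemma vs[simp]: "verts (star r) = {0..r}" by (simp add: verts_def star_def)
lemma as[simp]: "adj (star r) x y = ((x = 0 \<and> y \<noteq> 0) \<or> (y = 0 \<and> x \<noteq> 0))"
  by (simp add: adj_def star_def)

definition g :: "nat \<Rightarrow> nat \<times> nat \<Rightarrow> nat set" where
  "g r p = ({1..r} - {fst p}) \<union> (if snd p = 1 then {0} else {})"

lemma closure_avoid:
  assumes "x \<in> zf_closure (star r) S" "a \<notin> S" "b \<notin> S" "a \<noteq> b"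
    "a \<in> {1..r}" "b \<in> {1..r}"
  shows "x \<noteq> a \<and> x \<noteq> b"
  using assms(1)
proof (induction rule: zf_closure.induct)
  case (base x) then show ?case using assms by auto
next
  case (force v w)
  show ?case
  proof (rule ccontr)
    assume "\<not> (w \<noteq> a \<and> w \<noteq> b)"
    then have "w = a \<or> w = b" by blast
    then show False
    proof
      assume wa: "w = a"
      then have "v = 0" using force.hyps(4) assms by auto
      have "b \<in> verts (star r)" "adj (star r) v b" "b \<noteq> w" using assms wa \<open>v = 0\<close> by auto
      then show False using force(6) by blast
    next
      assume wb: "w = b"
      then have "v = 0" using force.hyps(4) assms by auto
      have "a \<in> verts (star r)" "adj (star r) v a" "a \<noteq> w" using assms wb \<open>v = 0\<close> by auto
      then show False using force(6) by blast
    qed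
  qed
qed

lemma zfs_char:
  assumes r2: "r \<ge> 2"
  shows "is_zfs (star r) S \<longleftrightarrow> (\<exists>a\<in>{0..r}. \<exists>e\<in>{0,1::nat}. S = g r (a,e))"
proof
  assume z: "is_zfs (star r) S"
  then have sub: "S \<subseteq> {0..r}" and cl: "{0..r} \<subseteq> zf_closure (star r) S"
    by (auto simp: is_zfs_def)
  have one: "a = b" if "a \<in> {1..r}" "b \<in> {1..r}" "a \<notin> S" "b \<notin> S" for a b
  proof (rule ccontr)
    assume "a \<noteq> b"
    have "a \<in> zf_closure (star r) S" using cl that by auto
    then show False using closure_avoid[OF _ that(3,4) \<open>a \<noteq> b\<close> that(1,2)] by blast
  qed
  define e :: nat where "e = (if 0 \<in> S then 1 else 0)"
  show "\<exists>a\<in>{0..r}. \<exists>e\<in>{0,1::nat}. S = g r (a,e)"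
  proof (cases "{1..r} \<subseteq> S")
    case True
    have "S = g r (0, e)" using True sub unfolding g_def e_def
      by (auto simp: Suc_le_eq) (metis atLeastAtMost_iff gr0I subsetD)+
    moreover have "e \<in> {0,1}" "(0::nat) \<in> {0..r}" by (auto simp: e_def)
    ultimately show ?thesis by blast
  next
    case False
    then obtain a where a: "a \<in> {1..r}" "a \<notin> S" by blast
    have "S = g r (a, e)"
    proof (rule set_eqI)
      fix x
      show "x \<in> S \<longleftrightarrow> x \<in> g r (a, e)"
      proof (cases "x = 0")
        case True then show ?thesis using a by (simp add: g_def e_def)
      next
        case False
        then have "x \<in> S \<longleftrightarrow> x \<in> {1..r} \<and> x \<noteq> a"
          using one[OF a(1) _ a(2), of x] a sub by auto
        then show ?thesis using False by (simp add: g_def)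
      qed
    qed
    moreover have "e \<in> {0,1}" "a \<in> {0..r}" using a by (auto simp: e_def)
    ultimately show ?thesis by blast
  qed
next
  assume "\<exists>a\<in>{0..r}. \<exists>e\<in>{0,1::nat}. S = g r (a,e)"
  then obtain a e where a: "a \<in> {0..r}" and S: "S = g r (a,e)" by blast
  have sub: "S \<subseteq> {0..r}" using a S by (auto simp: g_def)
  define b where "b = (if a = 1 then 2 else (1::nat))"
  have b: "b \<in> S" "b \<noteq> 0" using r2 S by (auto simp: g_def b_def)
  have c0: "0 \<in> zf_closure (star r) S"
  proof -
    have bc: "b \<in> zf_closure (star r) S" using b(1) by (rule zf_closure.base)
    have bv: "b \<in> verts (star r)" using b sub by auto
    have "\<forall>u\<in>verts (star r). adj (star r) b u \<and> u \<noteq> 0 \<longrightarrow> u \<in> zf_closure (star r) S"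
      using b(2) by simp
    then show ?thesis using zf_closure.force[OF bc bv, of 0] b(2) by simp
  qed
  have "x \<in> zf_closure (star r) S" if x: "x \<in> {0..r}" for x
  proof (cases "x = 0")
    case True then show ?thesis using c0 by simp
  next
    case x0: False
    show ?thesis
    proof (cases "x = a")
      case False
      then have "x \<in> S" using x x0 S by (simp add: g_def)
      then show ?thesis by (rule zf_closure.base)
    next
      case True
      have "\<forall>u\<in>verts (star r). adj (star r) 0 u \<and> u \<noteq> x \<longrightarrow> u \<in> zf_closure (star r) S"
      proof (intro ballI impI)
        fix u assume u: "u \<in> verts (star r)" "adj (star r) 0 u \<and> u \<noteq> x"
        then have "u \<in> S" using True S by (auto simp: g_def)
        then show "u \<in> zf_closure (star r) S" by (rule zf_closure.base)
      qed
      then show ?thesis using zf_closure.force[OF c0, of x] x x0 by simp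
    qed
  qed
  then show "is_zfs (star r) S" using sub by (auto simp: is_zfs_def)
qed


lemma mem_g0: "0 \<in> g r p \<longleftrightarrow> snd p = 1" by (simp add: g_def)
lemma mem_gx: "x \<noteq> 0 \<Longrightarrow> x \<in> g r p \<longleftrightarrow> x \<le> r \<and> x \<noteq> fst p" by (auto simp: g_def)

lemma g_inj: "inj_on (g r) ({0..r} \<times> {0,1::nat})"
proof (rule inj_onI)
  fix p q assume p: "p \<in> {0..r} \<times> {0,1::nat}" and q: "q \<in> {0..r} \<times> {0,1::nat}"
    and eq: "g r p = g r q"
  have "snd p = 1 \<longleftrightarrow> snd q = 1" using mem_g0[of r p] mem_g0[of r q] eq by simp
  then have "snd p = snd q" using p q by auto
  moreover have "fst p = fst q"
  proof (rule ccontr)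
    assume ne: "fst p \<noteq> fst q"
    show False
    proof (cases "fst p = 0")
      case True
      then have q0: "fst q \<noteq> 0" using ne by simp
      have "fst q \<le> r" using q by auto
      then have "fst q \<in> g r p" using mem_gx[OF q0, of r p] True q0 by simp
      moreover have "fst q \<notin> g r q" using mem_gx[OF q0, of r q] by simp
      ultimately show False using eq by simp
    next
      case False
      have "fst p \<le> r" using p by auto
      then have "fst p \<in> g r q" using mem_gx[OF False, of r q] ne by simp
      moreover have "fst p \<notin> g r p" using mem_gx[OF False, of r p] by simp
      ultimately show False using eq by simp
    qed
  qed
  ultimately show "p = q" by (simp add: prod_eq_iff)
qed

lemma card_g: assumes "p \<in> {0..r} \<times> {0,1::nat}"
  shows "card (g r p) = (if fst p = 0 then r else r - 1) + (if snd p = 1 then 1 else 0)"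
proof -
  have c1: "card ({1..r} - {fst p}) = (if fst p = 0 then r else r - 1)"
    using assms by (auto simp: card_Diff_singleton)
  show ?thesis
  proof (cases "snd p = 1")
    case True
    then have "g r p = insert 0 ({1..r} - {fst p})" by (auto simp: g_def)
    then show ?thesis using c1 True by simp
  next
    case False
    then have "g r p = {1..r} - {fst p}" by (auto simp: g_def)
    then show ?thesis using c1 False by simp
  qed
qed

lemma zfs_set: assumes r: "r \<ge> 2" shows "{S. is_zfs (star r) S} = g r ` ({0..r} \<times> {0,1::nat})"
proof (rule set_eqI)
  fix S
  show "S \<in> {S. is_zfs (star r) S} \<longleftrightarrow> S \<in> g r ` ({0..r} \<times> {0,1::nat})"
    unfolding mem_Collect_eq zfs_char[OF r] by blast
qed

lemma symdiff_g:
  assumes "a \<le> r" "c \<le> r" "e \<le> 1" "d \<le> (1::nat)"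
  shows "symdiff (g r (a,e)) (g r (c,d)) =
     (if a = c then {} else {a,c} - {0}) \<union> (if e = d then {} else {0})"
proof (rule set_eqI)
  fix x
  show "x \<in> symdiff (g r (a,e)) (g r (c,d)) \<longleftrightarrow>
     x \<in> (if a = c then {} else {a,c} - {0}) \<union> (if e = d then {} else {0})"
  proof (cases "x = 0")
    case True then show ?thesis using assms by (auto simp: symdiff_def g_def)
  next
    case False then show ?thesis using assms mem_gx[OF False, of r "(a,e)"] mem_gx[OF False, of r "(c,d)"]
      by (auto simp: symdiff_def)
  qed
qed

lemma symdiff_card:
  assumes "a \<le> r" "c \<le> r" "e \<le> 1" "d \<le> (1::nat)"
  shows "card (symdiff (g r (a,e)) (g r (c,d))) = 1 \<longleftrightarrow>
     (a = c \<and> e \<noteq> d) \<or> (e = d \<and> ((a = 0 \<and> c \<noteq> 0) \<or> (c = 0 \<and> a \<noteq> 0)))"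
proof -
  note sd = symdiff_g[OF assms]
  show ?thesis
  proof (cases "a = c")
    case True then show ?thesis using sd by (cases "e = d") auto
  next
    case ac: False
    show ?thesis
    proof (cases "e = d")
      case True
      show ?thesis
      proof (cases "a = 0")
        case a0: True
        then have "symdiff (g r (a,e)) (g r (c,d)) = {c}" using sd ac True by auto
        then show ?thesis using a0 ac True by simp
      next
        case a0: False
        show ?thesis
        proof (cases "c = 0")
          case True
          then have "symdiff (g r (a,e)) (g r (c,d)) = {a}" using sd ac \<open>e = d\<close> by auto
          then show ?thesis using a0 True \<open>e = d\<close> by simp
        next
          case False
          then have "symdiff (g r (a,e)) (g r (c,d)) = {a, c}" using sd ac \<open>e = d\<close> a0 by auto
          then show ?thesis using a0 False ac by simp
        qed
      qed
    next
      case False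
      have "card (symdiff (g r (a,e)) (g r (c,d))) \<ge> 2"
      proof (cases "a = 0")
        case True
        then have "symdiff (g r (a,e)) (g r (c,d)) = {0, c}" using sd ac False by auto
        then show ?thesis using True ac by simp
      next
        case a0: False
        have sub: "{0, a} \<subseteq> symdiff (g r (a,e)) (g r (c,d))" using sd ac False by simp
        have fin: "finite (symdiff (g r (a,e)) (g r (c,d)))" using sd by simp
        have "card {0, a} = 2" using a0 by simp
        then show ?thesis using card_mono[OF fin sub] by simp
      qed
      then show ?thesis using ac False by simp
    qed
  qed
qed


lemma vTAR[simp]: "verts (TAR G) = {S. is_zfs G S}" by (simp add: TAR_def verts_def)
lemma aTAR[simp]: "adj (TAR G) S T = (card (symdiff S T) = 1)" by (simp add: TAR_def adj_def)
lemma vcart[simp]: "verts (cart_prod (star r) K2) = {0..r} \<times> {0,1}"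
  by (simp add: cart_prod_def verts_def K2_def star_def)
lemma acart[simp]: "adj (cart_prod (star r) K2) (a,e) (c,d) =
   ((a = c \<and> e \<noteq> d) \<or> (e = d \<and> ((a = 0 \<and> c \<noteq> 0) \<or> (c = 0 \<and> a \<noteq> 0))))"
  by (simp add: cart_prod_def adj_def K2_def star_def)

lemma iso_part:
  assumes r: "r \<ge> 2"
  shows "graph_iso (TAR (star r)) (cart_prod (star r) K2)"
proof -
  let ?B = "{0..r} \<times> {0,1::nat}"
  define f where "f = inv_into ?B (g r)"
  have bg: "bij_betw (g r) ?B (g r ` ?B)" using g_inj by (rule inj_on_imp_bij_betw)
  have bf: "bij_betw f (g r ` ?B) ?B" unfolding f_def by (rule bij_betw_inv_into[OF bg])
  have fg: "f (g r p) = p" if "p \<in> ?B" for p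
    unfolding f_def using inv_into_f_f[OF g_inj that] .
  show ?thesis unfolding graph_iso_def
  proof (intro exI[of _ f] conjI)
    show "bij_betw f (verts (TAR (star r))) (verts (cart_prod (star r) K2))"
      using bf zfs_set[OF r] by simp
    show "\<forall>x\<in>verts (TAR (star r)). \<forall>y\<in>verts (TAR (star r)).
          adj (TAR (star r)) x y = adj (cart_prod (star r) K2) (f x) (f y)"
    proof (intro ballI)
      fix x y assume "x \<in> verts (TAR (star r))" "y \<in> verts (TAR (star r))"
      then have "x \<in> g r ` ?B" "y \<in> g r ` ?B" using zfs_set[OF r] by auto
      then obtain a e c d where p: "(a,e) \<in> ?B" "x = g r (a,e)" and q: "(c,d) \<in> ?B" "y = g r (c,d)"
        by blast
      have "a \<le> r" "c \<le> r" "e \<le> 1" "d \<le> 1" using p q by auto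
      then show "adj (TAR (star r)) x y = adj (cart_prod (star r) K2) (f x) (f y)"
        using symdiff_card fg[OF p(1)] fg[OF q(1)] p(2) q(2) by simp
    qed
  qed
qed

lemma zfs_card_ge:
  assumes r: "r \<ge> 2" and z: "is_zfs (star r) S"
  shows "card S \<ge> r - 1"
proof -
  obtain p where p: "p \<in> {0..r} \<times> {0,1::nat}" "S = g r p" using z zfs_set[OF r] by blast
  show ?thesis using card_g[OF p(1)] p(2) by (auto split: if_splits)
qed

lemma g_zfs: assumes r: "r \<ge> 2" and "a \<le> r" "e \<le> (1::nat)" shows "is_zfs (star r) (g r (a,e))"
proof -
  have "e \<in> {0,1}" "a \<in> {0..r}" using assms by auto
  then show ?thesis unfolding zfs_char[OF r] by blast
qed

lemma zfs_finite: "is_zfs (star r) S \<Longrightarrow> finite S"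
  by (auto simp: is_zfs_def intro: finite_subset)

lemma Z_part:
  assumes r: "r \<ge> 2"
  shows "Z (star r) = r - 1"
proof -
  have eq: "{card S | S. is_zfs (star r) S} = card ` g r ` ({0..r} \<times> {0,1::nat})"
  proof -
    have "{card S | S. is_zfs (star r) S} = card ` {S. is_zfs (star r) S}" by blast
    then show ?thesis using zfs_set[OF r] by simp
  qed
  have "card (g r (1,0)) = r - 1" using card_g[of "(1,0)" r] r by simp
  moreover have "is_zfs (star r) (g r (1,0))" using g_zfs[OF r, of 1 0] r by simp
  ultimately have mem: "r - 1 \<in> {card S | S. is_zfs (star r) S}"
    unfolding mem_Collect_eq by (intro exI[of _ "g r (1,0)"]) simp
  show ?thesis unfolding Z_def
  proof (rule Min_eqI)
    show "finite {card S | S. is_zfs (star r) S}" unfolding eq by simp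
    show "\<And>y. y \<in> {card S | S. is_zfs (star r) S} \<Longrightarrow> r - 1 \<le> y"
      using zfs_card_ge[OF r] by blast
  qed (rule mem)
qed

lemma Zbar_part:
  assumes r: "r \<ge> 2"
  shows "Zbar (star r) = r - 1"
proof -
  have "minimal_zfs (star r) S \<Longrightarrow> card S = r - 1" for S
  proof -
    assume m: "minimal_zfs (star r) S"
    then have z: "is_zfs (star r) S" and nt: "\<And>T. T \<subset> S \<Longrightarrow> \<not> is_zfs (star r) T"
      by (auto simp: minimal_zfs_def)
    obtain a e where p: "(a,e) \<in> {0..r} \<times> {0,1::nat}" "S = g r (a,e)" using z zfs_set[OF r] by blast
    have "a \<noteq> 0"
    proof
      assume a0: "a = 0"
      have "1 \<in> S" "1 \<notin> g r (1,0)" using p a0 r by (auto simp: g_def)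
      moreover have "g r (1,0) \<subseteq> S" using p a0 by (auto simp: g_def)
      ultimately have "g r (1,0) \<subset> S" by blast
      moreover have "is_zfs (star r) (g r (1,0))" using g_zfs[OF r] r by simp
      ultimately show False using nt by blast
    qed
    moreover have "e = 0"
    proof (rule ccontr)
      assume "e \<noteq> 0"
      then have e1: "e = 1" using p by auto
      have "0 \<in> S" "0 \<notin> g r (a,0)" using p e1 by (auto simp: g_def)
      moreover have "g r (a,0) \<subseteq> S" using p e1 by (auto simp: g_def)
      ultimately have "g r (a,0) \<subset> S" by blast
      moreover have "is_zfs (star r) (g r (a,0))" using g_zfs[OF r] p by simp
      ultimately show False using nt by blast
    qed
    ultimately show "card S = r - 1" using card_g[OF p(1)] p(2) by simp
  qed
  moreover have "minimal_zfs (star r) (g r (1,0))"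
  proof -
    have z: "is_zfs (star r) (g r (1,0))" using g_zfs[OF r] r by simp
    have c: "card (g r (1,0)) = r - 1" using card_g[of "(1,0)" r] r by simp
    have "\<not> is_zfs (star r) T" if "T \<subset> g r (1,0)" for T
    proof
      assume "is_zfs (star r) T"
      then have "card T \<ge> r - 1" by (rule zfs_card_ge[OF r])
      moreover have "card T < card (g r (1,0))"
        using psubset_card_mono[OF _ that] by (simp add: g_def)
      ultimately show False using c by simp
    qed
    then show ?thesis using z by (auto simp: minimal_zfs_def)
  qed
  moreover have "card (g r (1,0)) = r - 1" using card_g[of "(1,0)" r] r by simp
  ultimately have "{card S | S. minimal_zfs (star r) S} = {r - 1}"
  proof -
    assume h1: "\<And>S. minimal_zfs (star r) S \<Longrightarrow> card S = r - 1"
      and h2: "minimal_zfs (star r) (g r (1,0))" and h3: "card (g r (1,0)) = r - 1"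
    show ?thesis
    proof (rule set_eqI)
      fix x
      show "x \<in> {card S | S. minimal_zfs (star r) S} \<longleftrightarrow> x \<in> {r - 1}"
      proof
        assume "x \<in> {card S | S. minimal_zfs (star r) S}"
        then obtain S where "x = card S" "minimal_zfs (star r) S" by blast
        then show "x \<in> {r - 1}" using h1 by simp
      next
        assume "x \<in> {r - 1}"
        then have "x = card (g r (1,0))" using h3 by simp
        then show "x \<in> {card S | S. minimal_zfs (star r) S}" using h2
          unfolding mem_Collect_eq by (intro exI[of _ "g r (1,0)"]) simp
      qed
    qed
  qed
  then show ?thesis unfolding Zbar_def by simp
qed


lemma vTk[simp]: "verts (TAR_k G k) = {S. is_zfs G S \<and> card S \<le> k}" by (simp add: TAR_k_def verts_def)
lemma aTk[simp]: "adj (TAR_k G k) S T = (card (symdiff S T) = 1)" by (simp add: TAR_k_def adj_def)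

lemma rtranclp_sym:
  assumes "\<And>x y. R x y \<Longrightarrow> R y x" and "R\<^sup>*\<^sup>* x y"
  shows "R\<^sup>*\<^sup>* y x"
  using assms(2)
proof (induction rule: rtranclp_induct)
  case base then show ?case by simp
next
  case (step y z)
  then show ?case using assms(1) converse_rtranclp_into_rtranclp by metis
qed

lemma rtranclp_empty:
  assumes "\<And>x y. \<not> R x y" and "R\<^sup>*\<^sup>* x y"
  shows "x = y"
  using assms(2)
proof (induction rule: rtranclp_induct)
  case base then show ?case by simp
next
  case (step y z)
  then show ?case using assms(1) by blast
qed

lemma conn_ge:
  assumes r: "r \<ge> 2" and k: "r \<le> k"
  shows "connected_graph (TAR_k (star r) k)"
proof -
  let ?V = "verts (TAR_k (star r) k)"
  let ?R = "\<lambda>a b. a \<in> ?V \<and> b \<in> ?V \<and> adj (TAR_k (star r) k) a b"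
  have inV: "g r (a,e) \<in> ?V" if "a \<le> r" "e \<le> 1" "card (g r (a,e)) \<le> k" for a e
    using g_zfs[OF r that(1,2)] that(3) by simp
  have cg: "card (g r (a,e)) = (if a = 0 then r else r - 1) + (if e = 1 then 1 else 0)"
    if "a \<le> r" "e \<le> 1" for a e
  proof -
    have "(a,e) \<in> {0..r} \<times> {0,1::nat}" using that by auto
    from card_g[OF this] show ?thesis by simp
  qed
  have step: "?R (g r (a,e)) (g r (c,d))"
    if "a \<le> r" "e \<le> 1" "c \<le> r" "d \<le> 1" "card (g r (a,e)) \<le> k" "card (g r (c,d)) \<le> k"
       "(a = c \<and> e \<noteq> d) \<or> (e = d \<and> ((a = 0 \<and> c \<noteq> 0) \<or> (c = 0 \<and> a \<noteq> 0)))" for a e c d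
    using inV[of a e] inV[of c d] symdiff_card[of a r c e d] that by simp
  have sym: "?R x y \<Longrightarrow> ?R y x" for x y
    by (simp add: symdiff_def Un_commute)
  have L: "g r (0,0) \<in> ?V" using inV[of 0 0] cg[of 0 0] k by simp
  have toL: "?R\<^sup>*\<^sup>* (g r (a,e)) (g r (0,0))" if a: "a \<le> r" "e \<le> 1" "g r (a,e) \<in> ?V" for a e
  proof -
    have ck: "card (g r (a,e)) \<le> k" using a(3) by simp
    have c00: "card (g r (0,0)) \<le> k" using cg[of 0 0] k by simp
    show ?thesis
    proof (cases "a = 0")
      case True
      show ?thesis
      proof (cases "e = 0")
        case True then show ?thesis using \<open>a = 0\<close> by simp
      next
        case False
        then have "?R (g r (a,e)) (g r (0,0))" using step[OF a(1,2), of 0 0] ck c00 \<open>a = 0\<close> by simp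
        then show ?thesis by (rule r_into_rtranclp[of ?R])
      qed
    next
      case a0: False
      have ca0: "card (g r (a,0)) \<le> k" using cg[of a 0] a(1) k by auto
      have s1: "?R (g r (a,0)) (g r (0,0))" using step[of a 0 0 0] a(1) ca0 c00 a0 by simp
      show ?thesis
      proof (cases "e = 0")
        case True then show ?thesis using r_into_rtranclp[of ?R, OF s1] by simp
      next
        case False
        then have s2: "?R (g r (a,e)) (g r (a,0))" using step[of a e a 0] a ck ca0 by simp
        show ?thesis using converse_rtranclp_into_rtranclp[of ?R, OF s2 r_into_rtranclp[of ?R, OF s1]] .
      qed
    qed
  qed
  have all: "?R\<^sup>*\<^sup>* x (g r (0,0))" if "x \<in> ?V" for x
  proof -
    have "is_zfs (star r) x" using that by simp
    then obtain a e where "(a,e) \<in> {0..r} \<times> {0,1::nat}" "x = g r (a,e)" using zfs_set[OF r] by blast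
    then show ?thesis using toL[of a e] that by auto
  qed
  show ?thesis unfolding connected_graph_def
  proof (intro conjI ballI)
    show "?V \<noteq> {}" using L by blast
    fix x y assume "x \<in> ?V" "y \<in> ?V"
    then have "?R\<^sup>*\<^sup>* x (g r (0,0))" "?R\<^sup>*\<^sup>* y (g r (0,0))"
      using all by blast+
    moreover have "?R\<^sup>*\<^sup>* (g r (0,0)) y"
      by (rule rtranclp_sym[of ?R, OF sym]) (use calculation(2) in blast)+
    ultimately have "?R\<^sup>*\<^sup>* x (g r (0,0))" "?R\<^sup>*\<^sup>* (g r (0,0)) y" by blast+
    then show "?R\<^sup>*\<^sup>* x y" by (rule rtranclp_trans)
  qed
qed

lemma not_conn:
  assumes r: "r \<ge> 2" and k: "k < r"
  shows "\<not> connected_graph (TAR_k (star r) k)"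
proof
  assume c: "connected_graph (TAR_k (star r) k)"
  let ?V = "verts (TAR_k (star r) k)"
  let ?R = "\<lambda>a b. a \<in> ?V \<and> b \<in> ?V \<and> adj (TAR_k (star r) k) a b"
  have shape: "\<exists>a. 0 < a \<and> a \<le> r \<and> x = g r (a,0)" if "x \<in> ?V" for x
  proof -
    have "is_zfs (star r) x" "card x \<le> k" using that by auto
    then obtain a e where p: "(a,e) \<in> {0..r} \<times> {0,1::nat}" "x = g r (a,e)" using zfs_set[OF r] by blast
    have "card x = (if a = 0 then r else r - 1) + (if e = 1 then 1 else 0)"
      using card_g[OF p(1)] p(2) by simp
    then have "a \<noteq> 0" "e = 0" using \<open>card x \<le> k\<close> k p(1) by (auto split: if_splits)
    then show ?thesis using p by auto
  qed
  have noR: "\<not> ?R x y" for x y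
  proof
    assume h: "?R x y"
    obtain a where "0 < a" "a \<le> r" "x = g r (a,0)" using shape[of x] h by blast
    moreover obtain c where "0 < c" "c \<le> r" "y = g r (c,0)" using shape[of y] h by blast
    ultimately show False using h symdiff_card[of a r c 0 0] by simp
  qed
  have "?V \<noteq> {}" using c unfolding connected_graph_def by simp
  then obtain x where x: "x \<in> ?V" by blast
  obtain a where "0 < a" "a \<le> r" "x = g r (a,0)" using shape[OF x] by blast
  then have "card x = r - 1" using card_g[of "(a,0)" r] by simp
  then have kk: "r - 1 \<le> k" using x by simp
  have c1: "card (g r (1,0)) = r - 1" "card (g r (2,0)) = r - 1"
    using card_g[of "(1,0)" r] card_g[of "(2,0)" r] r by simp_all
  have v1: "g r (1,0) \<in> ?V" using g_zfs[OF r, of 1 0] r c1 kk by simp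
  have v2: "g r (2,0) \<in> ?V" using g_zfs[OF r, of 2 0] r c1 kk by simp
  have "\<forall>x\<in>?V. \<forall>y\<in>?V. ?R\<^sup>*\<^sup>* x y" using c unfolding connected_graph_def by simp
  then have "?R\<^sup>*\<^sup>* (g r (1,0)) (g r (2,0))" using v1 v2 by blast
  then have "g r (1,0) = g r (2,0)" by (rule rtranclp_empty[of ?R, OF noR])
  moreover have "1 \<in> g r (2,0)" "1 \<notin> g r (1,0)" using r by (auto simp: g_def)
  ultimately show False by simp
qed

theorem proposition1p5:
  fixes r :: nat
  assumes "r \<ge> 2"
  shows "graph_iso (TAR (star r)) (cart_prod (star r) K2)
       \<and> Zbar (star r) = r - 1 \<and> Z (star r) = r - 1
       \<and> z0 (star r) = r \<and> z0_under (star r) = r"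
proof (intro conjI)
  show "graph_iso (TAR (star r)) (cart_prod (star r) K2)" by (rule iso_part[OF assms])
  show "Zbar (star r) = r - 1" by (rule Zbar_part[OF assms])
  show "Z (star r) = r - 1" by (rule Z_part[OF assms])
  show "z0_under (star r) = r" unfolding z0_under_def
  proof (rule Least_equality)
    show "connected_graph (TAR_k (star r) r)" using conn_ge[OF assms] by simp
    show "\<And>y. connected_graph (TAR_k (star r) y) \<Longrightarrow> r \<le> y"
      using not_conn[OF assms] by (meson not_le)
  qed
  show "z0 (star r) = r" unfolding z0_def
  proof (rule Least_equality)
    show "\<forall>i. r \<le> i \<and> i \<le> card (verts (star r)) \<longrightarrow> connected_graph (TAR_k (star r) i)"
      using conn_ge[OF assms] by blast
    fix y assume h: "\<forall>i. y \<le> i \<and> i \<le> card (verts (star r)) \<longrightarrow> connected_graph (TAR_k (star r) i)"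
    show "r \<le> y"
    proof (rule ccontr)
      assume "\<not> r \<le> y"
      then have "y \<le> r - 1" "r - 1 \<le> card (verts (star r))" by auto
      then have "connected_graph (TAR_k (star r) (r - 1))" using h by blast
      moreover have "r - 1 < r" using assms by simp
      ultimately show False using not_conn[OF assms] by blast
    qed
  qed
qed

end
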